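(* Let $p \geq 6$ and $q \geq 3$ be integers and let $L$ be the Laplacian of the graph $K_p \oplus C_q$. Let $E_K$ be the span of the vectors $e_{-1}-e_{-k}$, $k=2,\ldots,p-1$ (equivalently, the vectors supported on $\{-p+1,\ldots,-1\}$ whose entries sum to $0$), and $E_K^\perp$ its orthogonal complement. For $\lambda > 4$ set $\sigma_+(\lambda) = \tfrac12[(2-\lambda) + \sqrt{(2-\lambda)^2-4}]$ and $$F_q(\lambda) = (1-\lambda)\,\sigma_+\,\frac{1+\sigma_+^{2q-3}}{1+\sigma_+^{2q-1}} - (p-\lambda)(1-\lambda) + (p-1), \quad \sigma_+ = \sigma_+(\lambda).$$ Then $\lambda > 4$ is an eigenvalue of $L$ with a corresponding eigenvector $v \in E_K^\perp$ if and only if $F_q(\lambda) = 0$. Furthermore, $F_q(\lambda) = 0$ has exactly one solution in $(p,p+2]$ and no solutions in $(4,p] \cup (p+2,+\infty)$.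
   Context: For integers $p \geq 3$, $q \geq 2$, the graph $K_p \oplus C_q$ has vertex set $\{-p+1,\ldots,0\} \cup \{1,\ldots,q-1\}$. Its edges are: every pair of distinct vertices in $\{-p+1,\ldots,0\}$, the edge $\{0,1\}$, and the edges $\{j,j+1\}$ for $1 \leq j \leq q-2$. The Laplacian $L$ is the matrix with $L_{ii}$ equal to the degree of vertex $i$, $L_{ij}=-1$ if $i\neq j$ are adjacent and $0$ otherwise. Vectors are real functions on the vertex set with the standard inner product; $e_j$ is the indicator vector of vertex $j$. *)

theory Defs
  imports Complex_Main
begin

text \<open>The graph K_p (+) C_q on the vertex set {-p+1,...,0} union {1,...,q-1} (integers).
  Vectors are real functions on the integers vanishing outside the vertex set.\<close>

definition verts :: "nat \<Rightarrow> nat \<Rightarrow> int set" where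
  "verts p q = {-(int p) + 1 .. int q - 1}"

definition adj :: "nat \<Rightarrow> nat \<Rightarrow> int \<Rightarrow> int \<Rightarrow> bool" where
  "adj p q i j \<longleftrightarrow> i \<in> verts p q \<and> j \<in> verts p q \<and> i \<noteq> j \<and>
     ((i \<le> 0 \<and> j \<le> 0) \<or> {i, j} = {0, 1} \<or> (i \<ge> 1 \<and> j \<ge> 1 \<and> \<bar>i - j\<bar> = 1))"

definition degree :: "nat \<Rightarrow> nat \<Rightarrow> int \<Rightarrow> nat" where
  "degree p q i = card {j \<in> verts p q. adj p q i j}"

definition lap :: "nat \<Rightarrow> nat \<Rightarrow> int \<Rightarrow> int \<Rightarrow> real" where
  "lap p q i j = (if i = j then real (degree p q i) else if adj p q i j then -1 else 0)"

definition vecs :: "nat \<Rightarrow> nat \<Rightarrow> (int \<Rightarrow> real) set" where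
  "vecs p q = {v. \<forall>i. i \<notin> verts p q \<longrightarrow> v i = 0}"

definition lap_apply :: "nat \<Rightarrow> nat \<Rightarrow> (int \<Rightarrow> real) \<Rightarrow> int \<Rightarrow> real" where
  "lap_apply p q v i = (if i \<in> verts p q then (\<Sum>j\<in>verts p q. lap p q i j * v j) else 0)"

definition inner_v :: "nat \<Rightarrow> nat \<Rightarrow> (int \<Rightarrow> real) \<Rightarrow> (int \<Rightarrow> real) \<Rightarrow> real" where
  "inner_v p q u v = (\<Sum>i\<in>verts p q. u i * v i)"

definition ind :: "int \<Rightarrow> int \<Rightarrow> real" where
  "ind j = (\<lambda>i. if i = j then 1 else 0)"

definition EK :: "nat \<Rightarrow> (int \<Rightarrow> real) set" where
  "EK p = {w. \<exists>c :: nat \<Rightarrow> real. w = (\<lambda>i. \<Sum>k\<in>{2..p-1}. c k * (ind (-1) i - ind (-(int k)) i))}"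

definition EK_perp :: "nat \<Rightarrow> nat \<Rightarrow> (int \<Rightarrow> real) set" where
  "EK_perp p q = {v \<in> vecs p q. \<forall>w\<in>EK p. inner_v p q w v = 0}"

definition sigma_plus :: "real \<Rightarrow> real" where
  "sigma_plus lam = ((2 - lam) + sqrt ((2 - lam)^2 - 4)) / 2"

definition Fq :: "nat \<Rightarrow> nat \<Rightarrow> real \<Rightarrow> real" where
  "Fq p q lam = (let s = sigma_plus lam in
     (1 - lam) * s * (1 + s ^ (2*q - 3)) / (1 + s ^ (2*q - 1))
     - (real p - lam) * (1 - lam) + (real p - 1))"

end

theory Submission
  imports Defs
begin



lemma lap_apply_nb:
  assumes "i \<in> verts p q"
  shows "lap_apply p q v i = (\<Sum>j\<in>{j\<in>verts p q. adj p q i j}. v i - v j)"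
proof -
  let ?V = "verts p q" let ?N = "{j\<in>verts p q. adj p q i j}"
  have fin: "finite ?V" by (simp add: verts_def)
  have "lap_apply p q v i = (\<Sum>j\<in>?V. lap p q i j * v j)" using assms by (simp add: lap_apply_def)
  also have "\<dots> = lap p q i i * v i + (\<Sum>j\<in>?V-{i}. lap p q i j * v j)"
    using fin assms by (simp add: sum.remove)
  also have "(\<Sum>j\<in>?V-{i}. lap p q i j * v j) = (\<Sum>j\<in>?V-{i}. if adj p q i j then - v j else 0)"
    by (rule sum.cong) (auto simp: lap_def)
  also have "\<dots> = (\<Sum>j\<in>{j\<in>?V-{i}. adj p q i j}. - v j)"
    by (rule sum.inter_filter[symmetric]) (use fin in simp)
  also have "{j\<in>?V-{i}. adj p q i j} = ?N" by (auto simp: adj_def)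
  finally have "lap_apply p q v i = real (card ?N) * v i - (\<Sum>j\<in>?N. v j)"
    by (simp add: lap_def degree_def sum_negf)
  also have "\<dots> = (\<Sum>j\<in>?N. v i - v j)" using fin by (simp add: sum_subtractf)
  finally show ?thesis .
qed

lemma nb_clique:
  assumes "- int p + 1 \<le> i" "i \<le> -1" "q \<ge> 1"
  shows "{j\<in>verts p q. adj p q i j} = {- int p + 1 .. 0} - {i}"
  using assms by (auto simp: adj_def verts_def)

lemma nb_zero:
  assumes "q \<ge> 2" "p \<ge> 1"
  shows "{j\<in>verts p q. adj p q 0 j} = insert 1 {- int p + 1 .. -1}"
  using assms by (auto simp: adj_def verts_def doubleton_eq_iff)

lemma nb_path:
  assumes "1 \<le> i" "i \<le> int q - 2" "p \<ge> 1"
  shows "{j\<in>verts p q. adj p q i j} = {i - 1, i + 1}"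
  using assms by (auto simp: adj_def verts_def doubleton_eq_iff)

lemma nb_end:
  assumes "q \<ge> 3" "p \<ge> 1"
  shows "{j\<in>verts p q. adj p q (int q - 1) j} = {int q - 2}"
  using assms by (auto simp: adj_def verts_def doubleton_eq_iff)

lemma lap_vals:
  assumes p: "p \<ge> 3" and q: "q \<ge> 3"
    and hc: "\<forall>i. - int p + 1 \<le> i \<and> i \<le> -1 \<longrightarrow> v i = a"
  shows "\<And>i. - int p + 1 \<le> i \<Longrightarrow> i \<le> -1 \<Longrightarrow> lap_apply p q v i = a - v 0"
    and "lap_apply p q v 0 = (real p - 1) * (v 0 - a) + (v 0 - v 1)"
    and "\<And>i. 1 \<le> i \<Longrightarrow> i \<le> int q - 2 \<Longrightarrow> lap_apply p q v i = 2 * v i - v (i - 1) - v (i + 1)"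
    and "lap_apply p q v (int q - 1) = v (int q - 1) - v (int q - 2)"
proof -
  fix i :: int assume i1: "- int p + 1 \<le> i" and i2: "i \<le> -1"
  have iv: "i \<in> verts p q" using i1 i2 q by (simp add: verts_def)
  have "lap_apply p q v i = (\<Sum>j\<in>{- int p + 1 .. 0} - {i}. v i - v j)"
    using lap_apply_nb[OF iv] nb_clique[OF i1 i2] q by simp
  also have "\<dots> = (\<Sum>j\<in>{- int p + 1 .. 0} - {i}. if j = 0 then a - v 0 else 0)"
    proof (rule sum.cong)
    fix j assume j: "j \<in> {- int p + 1 .. 0} - {i}"
    show "v i - v j = (if j = 0 then a - v 0 else 0)"
    proof (cases "j = 0")
      case False
      then have "v j = a" using hc j by auto
      moreover have "v i = a" using hc i1 i2 by auto
      ultimately show ?thesis using False by simp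
    qed (use hc i1 i2 in simp)
  qed simp
  also have "\<dots> = a - v 0" using i1 i2 p by simp
  finally show "lap_apply p q v i = a - v 0" .
next
  have iv: "0 \<in> verts p q" using p q by (simp add: verts_def)
  have "lap_apply p q v 0 = (\<Sum>j\<in>insert 1 {- int p + 1 .. -1}. v 0 - v j)"
    using lap_apply_nb[OF iv] nb_zero[of q p] p q by simp
  also have "\<dots> = (v 0 - v 1) + (\<Sum>j\<in>{- int p + 1 .. -1}. v 0 - v j)" by simp
  also have "(\<Sum>j\<in>{- int p + 1 .. -1}. v 0 - v j) = (\<Sum>j\<in>{- int p + 1 .. -1}. v 0 - a)"
    by (rule sum.cong) (use hc in simp_all)
  also have "\<dots> = (real p - 1) * (v 0 - a)"
  proof -
    have "card {- int p + 1 .. -1} = p - 1" by simp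
    then show ?thesis using p by (simp add: of_nat_diff)
  qed
  finally show "lap_apply p q v 0 = (real p - 1) * (v 0 - a) + (v 0 - v 1)" by simp
next
  fix i :: int assume i1: "1 \<le> i" and i2: "i \<le> int q - 2"
  have iv: "i \<in> verts p q" using i1 i2 p by (simp add: verts_def)
  have "lap_apply p q v i = (\<Sum>j\<in>{i - 1, i + 1}. v i - v j)"
    using lap_apply_nb[OF iv] nb_path[OF i1 i2] p by simp
  also have "\<dots> = 2 * v i - v (i - 1) - v (i + 1)" by simp
  finally show "lap_apply p q v i = 2 * v i - v (i - 1) - v (i + 1)" .
next
  have iv: "int q - 1 \<in> verts p q" using p q by (simp add: verts_def)
  show "lap_apply p q v (int q - 1) = v (int q - 1) - v (int q - 2)"
    using lap_apply_nb[OF iv] nb_end[of q p] p q by simp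
qed

lemma eig_char:
  assumes p: "p \<ge> 3" and q: "q \<ge> 3" and vv: "v \<in> vecs p q"
    and hc: "\<forall>i. - int p + 1 \<le> i \<and> i \<le> -1 \<longrightarrow> v i = a"
  shows "lap_apply p q v = (\<lambda>i. lam * v i) \<longleftrightarrow>
     (a - v 0 = lam * a \<and>
      (real p - 1) * (v 0 - a) + (v 0 - v 1) = lam * v 0 \<and>
      (\<forall>i. 1 \<le> i \<and> i \<le> int q - 2 \<longrightarrow> 2 * v i - v (i - 1) - v (i + 1) = lam * v i) \<and>
      v (int q - 1) - v (int q - 2) = lam * v (int q - 1))"
    (is "?L \<longleftrightarrow> ?R")
proof
  assume L: ?L
  show ?R
  proof (intro conjI allI impI)
    have va: "v (-1) = a" using hc[rule_format, of "-1"] p by simp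
    show "a - v 0 = lam * a" using lap_vals(1)[OF p q hc, of "-1"] p fun_cong[OF L, of "-1"] va by simp
    show "(real p - 1) * (v 0 - a) + (v 0 - v 1) = lam * v 0"
      using lap_vals(2)[OF p q hc] fun_cong[OF L, of 0] by simp
    show "v (int q - 1) - v (int q - 2) = lam * v (int q - 1)"
      using lap_vals(4)[OF p q hc] fun_cong[OF L, of "int q - 1"] by simp
    fix i :: int assume "1 \<le> i \<and> i \<le> int q - 2"
    then show "2 * v i - v (i - 1) - v (i + 1) = lam * v i"
      using lap_vals(3)[OF p q hc, of i] fun_cong[OF L, of i] by simp
  qed
next
  assume R: ?R
  show ?L
  proof
    fix i :: int
    consider "i \<notin> verts p q" | "- int p + 1 \<le> i \<and> i \<le> -1" | "i = 0"
      | "1 \<le> i \<and> i \<le> int q - 2" | "i = int q - 1"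
      by (force simp: verts_def)
    then show "lap_apply p q v i = lam * v i"
    proof cases
      case 1 then show ?thesis using vv by (simp add: lap_apply_def vecs_def)
    next
      case 2
      then have "v i = a" using hc by blast
      then show ?thesis using lap_vals(1)[OF p q hc, of i] R 2 by simp
    next
      case 3 then show ?thesis using lap_vals(2)[OF p q hc] R by simp
    next
      case 4 then show ?thesis using lap_vals(3)[OF p q hc, of i] R by simp
    next
      case 5 then show ?thesis using lap_vals(4)[OF p q hc] R by simp
    qed
  qed
qed



lemma sigma_props:
  assumes l: "lam > 4"
  shows "sigma_plus lam ^ 2 + 1 = (2 - lam) * sigma_plus lam"
    and "-1 < sigma_plus lam" and "sigma_plus lam < 0"
proof -
  define d where "d = sqrt ((2 - lam)^2 - 4)"
  have "(2::real)^2 \<le> (lam - 2)^2" using l by (intro power_mono) auto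
  then have h4: "4 \<le> (lam - 2)^2" by simp
  have pos: "(2 - lam)^2 - 4 \<ge> 0" using h4 power2_commute[of lam 2] by linarith
  have d2: "d^2 = (2 - lam)^2 - 4" using pos by (simp add: d_def)
  have d0: "d \<ge> 0" using pos by (simp add: d_def)
  have s: "sigma_plus lam = ((2 - lam) + d) / 2" by (simp add: sigma_plus_def d_def)
  show "sigma_plus lam ^ 2 + 1 = (2 - lam) * sigma_plus lam"
    unfolding s using d2 by (simp add: power2_eq_square field_simps)
  have "d < lam - 2"
  proof (rule ccontr)
    assume "\<not> d < lam - 2"
    then have "(lam - 2)^2 \<le> d^2" using l by (intro power_mono) auto
    then show False using d2 by (simp add: power2_eq_square algebra_simps)
  qed
  then show "sigma_plus lam < 0" unfolding s by simp
  have "d > lam - 4"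
  proof (rule ccontr)
    assume "\<not> d > lam - 4"
    then have "d^2 \<le> (lam - 4)^2" using d0 by (intro power_mono) auto
    then show False using d2 l by (simp add: power2_eq_square algebra_simps)
  qed
  then show "-1 < sigma_plus lam" unfolding s by simp
qed

fun cf :: "nat \<Rightarrow> real \<Rightarrow> real" where
  "cf 0 l = 1"
| "cf (Suc k) l = 1 / ((2 - l) - cf k l)"

lemma cf_bounds:
  assumes "l > 4"
  shows "-1 < cf k l \<and> cf k l \<le> 1 \<and> (k \<ge> 1 \<longrightarrow> cf k l < 0)"
proof (induction k)
  case 0 then show ?case by simp
next
  case (Suc k)
  define D where "D = (2 - l) - cf k l"
  have D: "D < -1" using Suc assms by (simp add: D_def)
  have "1 / D < 0" using D by (simp add: divide_less_0_iff)
  moreover have "-1 < 1 / D" using D by (simp add: field_simps)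
  ultimately show ?case by (simp add: D_def)
qed

lemma cf_mono:
  assumes "4 < l1" "l1 \<le> l2"
  shows "cf k l1 \<le> cf k l2"
proof (induction k)
  case 0 then show ?case by simp
next
  case (Suc k)
  define D1 where "D1 = (2 - l1) - cf k l1"
  define D2 where "D2 = (2 - l2) - cf k l2"
  have "D1 < -1" using cf_bounds[of l1 k] assms by (simp add: D1_def)
  moreover have "D2 \<le> D1" using Suc assms by (simp add: D1_def D2_def)
  ultimately have "1 / D1 \<le> 1 / D2" by (simp add: field_simps)
  then show ?case by (simp add: D1_def D2_def)
qed

definition gg :: "nat \<Rightarrow> real \<Rightarrow> nat \<Rightarrow> real" where
  "gg q l j = sigma_plus l ^ j + sigma_plus l ^ (2*q - 1 - j)"

lemma pow_rec:
  assumes e: "s^2 + 1 = (c::real) * s"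
  shows "s ^ n + s ^ Suc (Suc n) = c * s ^ Suc n"
proof -
  have "s ^ n + s ^ Suc (Suc n) = s ^ n * (s^2 + 1)" by (simp add: power2_eq_square algebra_simps)
  also have "\<dots> = s ^ n * (c * s)" using e by simp
  also have "\<dots> = c * s ^ Suc n" by (simp add: algebra_simps)
  finally show ?thesis .
qed

lemma gg_rec:
  assumes l: "l > 4" and j: "1 \<le> j" "j \<le> 2*q - 2"
  shows "gg q l (j - 1) + gg q l (j + 1) = (2 - l) * gg q l j"
proof -
  let ?s = "sigma_plus l"
  have e: "?s^2 + 1 = (2 - l) * ?s" using sigma_props[OF l] by simp
  define a where "a = j - 1"
  define b where "b = 2*q - 2 - j"
  have a: "j = Suc a" "j - 1 = a" "j + 1 = Suc (Suc a)" using j unfolding a_def by linarith+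
  have b: "2*q - 1 - Suc a = Suc b" "2*q - 1 - a = Suc (Suc b)" "2*q - 1 - Suc (Suc a) = b"
    using j a unfolding b_def by linarith+
  have "gg q l (j - 1) + gg q l (j + 1) = (?s ^ a + ?s ^ Suc (Suc a)) + (?s ^ b + ?s ^ Suc (Suc b))"
    unfolding gg_def a(2,3) b(2,3) by simp
  also have "\<dots> = (2 - l) * ?s ^ Suc a + (2 - l) * ?s ^ Suc b"
    using pow_rec[OF e, of a] pow_rec[OF e, of b] by simp
  also have "\<dots> = (2 - l) * gg q l j" unfolding gg_def a(1) b(1) by (simp add: algebra_simps)
  finally show ?thesis .
qed

lemma gg_end: "q \<ge> 1 \<Longrightarrow> gg q l q = gg q l (q - 1)"
  unfolding gg_def by (simp add: add.commute)

lemma gg_pos_factor: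
  assumes l: "l > 4" and j: "j \<le> q - 1" "q \<ge> 1"
  shows "gg q l j = sigma_plus l ^ j * (1 + sigma_plus l ^ (2*q - 1 - 2*j))"
    and "1 + sigma_plus l ^ (2*q - 1 - 2*j) > 0"
proof -
  let ?s = "sigma_plus l"
  have "2*q - 1 - j = j + (2*q - 1 - 2*j)" using j by linarith
  then show "gg q l j = ?s ^ j * (1 + ?s ^ (2*q - 1 - 2*j))"
    unfolding gg_def by (simp add: power_add algebra_simps)
  have "\<bar>?s\<bar> < 1" using sigma_props[OF l] by simp
  have "2*q - 1 - 2*j \<noteq> 0" using j by linarith
  then have "\<bar>?s ^ (2*q - 1 - 2*j)\<bar> < 1" using \<open>\<bar>?s\<bar> < 1\<close>
    by (simp add: power_abs power_less_one_iff)
  then show "1 + ?s ^ (2*q - 1 - 2*j) > 0" by linarith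
qed

lemma gg_nz:
  assumes l: "l > 4" and j: "j \<le> q" "q \<ge> 1"
  shows "gg q l j \<noteq> 0"
proof (cases "j = q")
  case True
  have "gg q l (q - 1) \<noteq> 0" using gg_pos_factor[OF l, of "q - 1" q] j sigma_props[OF l] by simp
  then show ?thesis using True gg_end[OF j(2)] by simp
next
  case False
  have jj: "j \<le> q - 1" using j False by linarith
  have "sigma_plus l \<noteq> 0" using sigma_props[OF l] by simp
  then have "sigma_plus l ^ j \<noteq> 0" by simp
  then show ?thesis using gg_pos_factor[OF l jj j(2)] by simp
qed

lemma gg_cf:
  assumes l: "l > 4" and q: "q \<ge> 1"
  shows "k \<le> q - 1 \<Longrightarrow> gg q l (q - k) / gg q l (q - 1 - k) = cf k l"
proof (induction k)
  case 0 then show ?case using gg_end[OF q] gg_nz[OF l, of "q-1" q] q by simp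
next
  case (Suc k)
  let ?j = "q - 2 - k"
  have r: "gg q l ?j + gg q l (?j + 2) = (2 - l) * gg q l (?j + 1)"
    using gg_rec[OF l, of "?j + 1" q] Suc.prems by (simp add: numeral_2_eq_2)
  have e1: "q - Suc k = ?j + 1" "q - 1 - Suc k = ?j" "q - k = ?j + 2" "q - 1 - k = ?j + 1"
    using Suc.prems by auto
  have nz: "gg q l (?j + 1) \<noteq> 0" using gg_nz[OF l, of "?j + 1" q] q by simp
  have nz0: "gg q l ?j \<noteq> 0" using gg_nz[OF l, of "?j" q] q by simp
  have IH: "gg q l (?j + 2) / gg q l (?j + 1) = cf k l" using Suc e1 by simp
  have "gg q l ?j = gg q l (?j + 1) * ((2 - l) - cf k l)"
    using r IH nz by (simp add: field_simps) 
  moreover have "(2 - l) - cf k l \<noteq> 0" using cf_bounds[OF l, of k] l by linarith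
  ultimately show ?case unfolding e1 using nz nz0 by (simp add: field_simps)
qed

lemma Fq_cf:
  assumes l: "l > 4" and q: "q \<ge> 3"
  shows "Fq p q l = (1 - l) * cf (q - 1) l - (real p - l) * (1 - l) + (real p - 1)"
proof -
  let ?s = "sigma_plus l"
  have g1: "gg q l 1 = ?s * (1 + ?s ^ (2*q - 3))"
  proof -
    have "2*q - 1 - 1 = Suc (2*q - 3)" using q by linarith
    then show ?thesis unfolding gg_def by (simp add: algebra_simps)
  qed
  have g0: "gg q l 0 = 1 + ?s ^ (2*q - 1)" unfolding gg_def by simp
  have c: "gg q l 1 / gg q l 0 = cf (q - 1) l" using gg_cf[OF l, of q "q - 1"] q by simp
  have "Fq p q l = (1 - l) * (gg q l 1 / gg q l 0) - (real p - l) * (1 - l) + (real p - 1)"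
    unfolding Fq_def Let_def g1 g0 by (simp add: mult.assoc)
  then show ?thesis by (simp only: c)
qed

lemma Fq_gg:
  assumes l: "l > 4" and q: "q \<ge> 3"
  shows "Fq p q l = (1 - l) * (gg q l 1 / gg q l 0) - (real p - l) * (1 - l) + (real p - 1)"
proof -
  let ?s = "sigma_plus l"
  have g1: "gg q l 1 = ?s * (1 + ?s ^ (2*q - 3))"
  proof -
    have "2*q - 1 - 1 = Suc (2*q - 3)" using q by linarith
    then show ?thesis unfolding gg_def by (simp add: algebra_simps)
  qed
  have g0: "gg q l 0 = 1 + ?s ^ (2*q - 1)" unfolding gg_def by simp
  show ?thesis
    unfolding Fq_def Let_def g1 g0 by (simp add: mult.assoc)
qed



lemma sum_delta_mult:
  assumes "finite S" "a \<in> S"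
  shows "(\<Sum>i\<in>S. (if i = a then 1 else 0) * (f i :: real)) = f a"
proof -
  have "(\<Sum>i\<in>S. (if i = a then 1 else 0) * f i) = (\<Sum>i\<in>S. if i = a then f a else 0)"
    by (rule sum.cong) auto
  then show ?thesis using assms by simp
qed

lemma ind_inner:
  assumes k: "2 \<le> k" "k \<le> p - 1" and q: "q \<ge> 1"
  shows "inner_v p q (\<lambda>i. ind (-1) i - ind (- int k) i) v = v (-1) - v (- int k)"
proof -
  have m1: "-1 \<in> verts p q" and mk: "- int k \<in> verts p q" using k q by (auto simp: verts_def)
  have fin: "finite (verts p q)" by (simp add: verts_def)
  have "inner_v p q (\<lambda>i. ind (-1) i - ind (- int k) i) v
        = (\<Sum>i\<in>verts p q. (if i = -1 then 1 else 0) * v i) - (\<Sum>i\<in>verts p q. (if i = - int k then 1 else 0) * v i)"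
    unfolding inner_v_def ind_def by (simp add: left_diff_distrib sum_subtractf)
  also have "\<dots> = v (-1) - v (- int k)" using m1 mk fin by (simp only: sum_delta_mult)
  finally show ?thesis .
qed

lemma perp_const:
  assumes v: "v \<in> EK_perp p q" and q: "q \<ge> 1" and i: "- int p + 1 \<le> i" "i \<le> -1"
  shows "v i = v (-1)"
proof (cases "i = -1")
  case False
  define k where "k = nat (- i)"
  have k: "2 \<le> k" "k \<le> p - 1" "i = - int k" using i False unfolding k_def by auto
  define w where "w = (\<lambda>i. ind (-1) i - ind (- int k) i)"
  have "w \<in> EK p"
    unfolding EK_def
  proof (rule CollectI, rule exI[of _ "\<lambda>k'. if k' = k then 1 else 0"], rule ext)
    fix j
    show "w j = (\<Sum>k'\<in>{2..p-1}. (if k' = k then 1 else 0) * (ind (-1) j - ind (- int k') j))"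
      using k by (subst sum_delta_mult) (auto simp: w_def)
  qed
  then have "inner_v p q w v = 0" using v by (auto simp: EK_perp_def)
  then show ?thesis using ind_inner[OF k(1,2) q, of v] k(3) by (simp add: w_def)
qed simp

lemma wronski:
  fixes x y :: "nat \<Rightarrow> real"
  assumes n: "n \<ge> 1"
    and rx: "\<And>j. 1 \<le> j \<Longrightarrow> j \<le> n - 1 \<Longrightarrow> x (j - 1) + x (j + 1) = c * x j"
    and ry: "\<And>j. 1 \<le> j \<Longrightarrow> j \<le> n - 1 \<Longrightarrow> y (j - 1) + y (j + 1) = c * y j"
    and ex: "x (n - 1) = d * x n" and ey: "y (n - 1) = d * y n"
  shows "x 0 * y 1 = x 1 * y 0"
proof -
  define W where "W j = x j * y (j + 1) - x (j + 1) * y j" for j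
  have "k \<le> n - 1 \<Longrightarrow> W (n - 1 - k) = 0" for k
  proof (induction k)
    case 0
    have "W (n - 1) = x (n - 1) * y n - x n * y (n - 1)" using n by (simp add: W_def)
    also have "\<dots> = 0" using ex ey by simp
    finally show ?case by simp
  next
    case (Suc k)
    define j where "j = n - 1 - k"
    have j: "1 \<le> j" "j \<le> n - 1" "n - 1 - Suc k = j - 1" "j - 1 + 1 = j" using Suc.prems unfolding j_def by auto
    have xr: "x (j - 1) = c * x j - x (j + 1)" using rx[OF j(1,2)] by simp
    have yr: "y (j - 1) = c * y j - y (j + 1)" using ry[OF j(1,2)] by simp
    have "W (j - 1) = x (j - 1) * y j - x j * y (j - 1)" unfolding W_def j(4) ..
    also have "\<dots> = W j" unfolding xr yr W_def by (simp add: algebra_simps)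
    also have "\<dots> = 0" using Suc unfolding j_def by simp
    finally show ?case using j(3) by simp
  qed
  from this[of "n - 1"] show ?thesis by (simp add: W_def)
qed

lemma zero_prop:
  fixes x :: "nat \<Rightarrow> real"
  assumes x0: "x 0 = 0" and x1: "x 1 = 0"
    and rx: "\<And>j. 1 \<le> j \<Longrightarrow> j \<le> n - 1 \<Longrightarrow> x (j - 1) + x (j + 1) = c * x j"
  shows "j + 1 \<le> n \<Longrightarrow> x j = 0 \<and> x (j + 1) = 0"
proof (induction j)
  case 0 then show ?case using x0 x1 by simp
next
  case (Suc j)
  then have h: "x j = 0" "x (j + 1) = 0" by auto
  have "x j + x (j + 2) = c * x (j + 1)" using rx[of "j + 1"] Suc.prems by simp
  then show ?case using h by simp
qed



lemma gg_end_rec: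
  assumes l: "l > 4" and q: "q \<ge> 3"
  shows "gg q l (q - 2) = (1 - l) * gg q l (q - 1)"
proof -
  have "gg q l (q - 1 - 1) + gg q l (q - 1 + 1) = (2 - l) * gg q l (q - 1)"
    using gg_rec[OF l, of "q - 1" q] q by simp
  moreover have "q - 1 + 1 = q" "q - 1 - 1 = q - 2" using q by auto
  ultimately show ?thesis using gg_end[of q l] q by (simp add: algebra_simps)
qed

lemma gg0_pos: "l > 4 \<Longrightarrow> q \<ge> 1 \<Longrightarrow> gg q l 0 > 0"
  using gg_pos_factor[of l 0 q] by simp

lemma eigen_part:
  assumes p: "p \<ge> 3" and q: "q \<ge> 3" and l: "lam > 4"
  shows "(\<exists>v \<in> EK_perp p q. v \<noteq> (\<lambda>_. 0) \<and> lap_apply p q v = (\<lambda>i. lam * v i))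
             \<longleftrightarrow> Fq p q lam = 0"
proof -
  define G where "G = gg q lam"
  have G0: "G 0 > 0" using gg0_pos[OF l] q by (simp add: G_def)
  have FG: "G 0 * Fq p q lam = (1 - lam) * G 1 - ((real p - lam) * (1 - lam) - (real p - 1)) * G 0"
    using Fq_gg[OF l q, of p] G0 unfolding G_def[symmetric] by (simp add: field_simps)
  have Grec: "G (j - 1) + G (j + 1) = (2 - lam) * G j" if "1 \<le> j" "j \<le> q - 2" for j
    using gg_rec[OF l, of j q] that unfolding G_def by simp
  have Gend: "G (q - 2) = (1 - lam) * G (q - 1)" using gg_end_rec[OF l q] by (simp add: G_def)
  show ?thesis
  proof
    assume "\<exists>v \<in> EK_perp p q. v \<noteq> (\<lambda>_. 0) \<and> lap_apply p q v = (\<lambda>i. lam * v i)"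
    then obtain v where vp: "v \<in> EK_perp p q" and vnz: "v \<noteq> (\<lambda>_. 0)"
      and ev: "lap_apply p q v = (\<lambda>i. lam * v i)" by blast
    define a where "a = v (-1)"
    have vv: "v \<in> vecs p q" using vp by (simp add: EK_perp_def)
    have hc: "\<forall>i. - int p + 1 \<le> i \<and> i \<le> -1 \<longrightarrow> v i = a"
    proof (intro allI impI)
      fix i :: int assume "- int p + 1 \<le> i \<and> i \<le> -1"
      then show "v i = a" using perp_const[OF vp, of i] q unfolding a_def by linarith
    qed
    have E: "a - v 0 = lam * a"
      "(real p - 1) * (v 0 - a) + (v 0 - v 1) = lam * v 0"
      "\<And>i. 1 \<le> i \<Longrightarrow> i \<le> int q - 2 \<Longrightarrow> 2 * v i - v (i - 1) - v (i + 1) = lam * v i"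
      "v (int q - 1) - v (int q - 2) = lam * v (int q - 1)"
      using eig_char[OF p q vv hc, of lam] ev by auto
    define x where "x j = v (int j)" for j
    have xrec: "x (j - 1) + x (j + 1) = (2 - lam) * x j" if "1 \<le> j" "j \<le> q - 1 - 1" for j
    proof -
      have "2 * v (int j) - v (int j - 1) - v (int j + 1) = lam * v (int j)"
        using E(3)[of "int j"] that by simp
      moreover have "int (j - 1) = int j - 1" "int (j + 1) = int j + 1" using that by auto
      ultimately show ?thesis unfolding x_def by (simp add: algebra_simps)
    qed
    have xend: "x (q - 1 - 1) = (1 - lam) * x (q - 1)"
    proof -
      have "int (q - 1 - 1) = int q - 2" "int (q - 1) = int q - 1" using q by auto
      then show ?thesis using E(4) unfolding x_def by (simp add: algebra_simps)
    qed
    have W: "x 0 * G 1 = x 1 * G 0"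
      by (rule wronski[of "q - 1" x "2 - lam" G "1 - lam"])
         (use q xrec xend Grec Gend in \<open>auto simp: numeral_2_eq_2\<close>)
    have x0: "x 0 = (1 - lam) * a" using E(1) unfolding x_def by (simp add: algebra_simps)
    have x1: "x 1 = ((real p - lam) * (1 - lam) - (real p - 1)) * a"
    proof -
      have v0a: "v 0 = (1 - lam) * a" using E(1) by (simp add: algebra_simps)
      have "v 1 = (real p - lam) * v 0 - (real p - 1) * a" using E(2) by (simp add: algebra_simps)
      then show ?thesis unfolding x_def using v0a by (simp add: algebra_simps)
    qed
    have WW: "(1 - lam) * a * G 1 = ((real p - lam) * (1 - lam) - (real p - 1)) * a * G 0"
      using W unfolding x0 x1 by simp
    have "a * (G 0 * Fq p q lam) = (1 - lam) * a * G 1 - ((real p - lam) * (1 - lam) - (real p - 1)) * a * G 0"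
      unfolding FG by (simp add: algebra_simps)
    then have "a * (G 0 * Fq p q lam) = 0" using WW by simp
    moreover have "a \<noteq> 0"
    proof
      assume a0: "a = 0"
      have xz: "x j = 0" if "j \<le> q - 1" for j
      proof -
        have z0: "x 0 = 0" "x 1 = 0" using x0 x1 a0 by auto
        have zp: "x m = 0 \<and> x (m + 1) = 0" if "m + 1 \<le> q - 1" for m
          by (rule zero_prop[where x=x and n="q - 1" and c="2 - lam"]) (use z0 xrec that in auto)
        show ?thesis
        proof (cases j)
          case (Suc m) then show ?thesis using zp[of m] that by simp
        qed (use z0 in simp)
      qed
      have "v = (\<lambda>_. 0)"
      proof
        fix i
        consider "i \<notin> verts p q" | "- int p + 1 \<le> i \<and> i \<le> -1" | "0 \<le> i \<and> i \<le> int q - 1"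
          by (force simp: verts_def)
        then show "v i = 0"
        proof cases
          case 1 then show ?thesis using vv by (simp add: vecs_def)
        next
          case 2 then show ?thesis using hc a0 by auto
        next
          case 3
          then have "nat i \<le> q - 1" by linarith
          then have "x (nat i) = 0" by (rule xz)
          then show ?thesis using 3 unfolding x_def by simp
        qed
      qed
      then show False using vnz by simp
    qed
    ultimately show "Fq p q lam = 0" using G0 by simp
  next
    assume F0: "Fq p q lam = 0"
    define v where "v i = (if - int p + 1 \<le> i \<and> i \<le> -1 then G 0
        else if 0 \<le> i \<and> i \<le> int q - 1 then (1 - lam) * G (nat i) else 0)" for i
    have vv: "v \<in> vecs p q" unfolding vecs_def verts_def v_def using p by auto
    have hc: "\<forall>i. - int p + 1 \<le> i \<and> i \<le> -1 \<longrightarrow> v i = G 0" by (simp add: v_def)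
    have vperp: "v \<in> EK_perp p q"
      unfolding EK_perp_def
    proof (intro CollectI conjI ballI vv)
      fix w assume "w \<in> EK p"
      then obtain c where w: "w = (\<lambda>i. \<Sum>k\<in>{2..p-1}. c k * (ind (-1) i - ind (-(int k)) i))"
        by (auto simp: EK_def)
      have "inner_v p q w v = (\<Sum>i\<in>verts p q. \<Sum>k\<in>{2..p-1}. c k * ((ind (-1) i - ind (-(int k)) i) * v i))"
        unfolding inner_v_def w by (simp add: sum_distrib_right mult.assoc)
      also have "\<dots> = (\<Sum>k\<in>{2..p-1}. c k * inner_v p q (\<lambda>i. ind (-1) i - ind (-(int k)) i) v)"
        unfolding inner_v_def by (subst sum.swap) (simp add: sum_distrib_left)
      also have "\<dots> = 0"
      proof (rule sum.neutral, rule ballI)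
        fix k assume k: "k \<in> {2..p-1}"
        have "inner_v p q (\<lambda>i. ind (-1) i - ind (-(int k)) i) v = v (-1) - v (- int k)"
          using ind_inner[of k p q v] k q by auto
        also have "\<dots> = 0" using k hc p by auto
        finally show "c k * inner_v p q (\<lambda>i. ind (-1) i - ind (-(int k)) i) v = 0" by simp
      qed
      finally show "inner_v p q w v = 0" .
    qed
    have vnz: "v \<noteq> (\<lambda>_. 0)"
    proof
      assume "v = (\<lambda>_. 0)"
      then have "v (-1) = 0" by simp
      then show False using G0 p by (simp add: v_def)
    qed
    have v0: "v 0 = (1 - lam) * G 0" using q by (simp add: v_def)
    have v1: "v 1 = (1 - lam) * G 1" using q by (simp add: v_def)
    have "lap_apply p q v = (\<lambda>i. lam * v i)"
    proof (subst eig_char[OF p q vv hc], intro conjI allI impI)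
      show "G 0 - v 0 = lam * G 0" unfolding v0 by (simp add: algebra_simps)
      have "(1 - lam) * G 1 = ((real p - lam) * (1 - lam) - (real p - 1)) * G 0"
        using FG F0 by simp
      then show "(real p - 1) * (v 0 - G 0) + (v 0 - v 1) = lam * v 0"
        unfolding v0 v1 by (simp add: algebra_simps)
    next
      fix i :: int assume i: "1 \<le> i \<and> i \<le> int q - 2"
      define j where "j = nat i"
      have j: "1 \<le> j" "j \<le> q - 2" "i = int j" using i unfolding j_def by auto
      have vi: "v i = (1 - lam) * G j" "v (i - 1) = (1 - lam) * G (j - 1)" "v (i + 1) = (1 - lam) * G (j + 1)"
        using j p unfolding v_def by (auto simp: nat_diff_distrib' nat_add_distrib)
      show "2 * v i - v (i - 1) - v (i + 1) = lam * v i"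
      proof -
        have gr: "G (j - 1) = (2 - lam) * G j - G (j + 1)" using Grec[OF j(1,2)] by simp
        show ?thesis unfolding vi gr by (simp add: algebra_simps)
      qed
    next
      have vq: "v (int q - 1) = (1 - lam) * G (q - 1)" "v (int q - 2) = (1 - lam) * G (q - 2)"
        using q p unfolding v_def by (auto simp: nat_diff_distrib')
      show "v (int q - 1) - v (int q - 2) = lam * v (int q - 1)"
        unfolding vq Gend by (simp add: algebra_simps)
    qed
    then show "\<exists>v \<in> EK_perp p q. v \<noteq> (\<lambda>_. 0) \<and> lap_apply p q v = (\<lambda>i. lam * v i)"
      using vperp vnz by blast
  qed
qed



lemma R_facts:
  assumes q: "q \<ge> 3" and l: "l > 4"
  shows "-1 < cf (q - 1) l" "cf (q - 1) l < 0"
  using cf_bounds[OF l, of "q - 1"] q by auto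

lemma F_pos:
  assumes p: "p \<ge> 6" and q: "q \<ge> 3" and l: "4 < l" "l \<le> real p"
  shows "Fq p q l > 0"
proof -
  define R where "R = cf (q - 1) l"
  have R: "-1 < R" "R < 0" using R_facts[OF q l(1)] by (auto simp: R_def)
  have F: "Fq p q l = (l - 1) * (- R) + (l - 1) * (real p - l) + (real p - 1)"
    using Fq_cf[OF l(1) q, of p] unfolding R_def[symmetric] by (simp add: algebra_simps)
  have "(l - 1) * (- R) > 0" using R l by (simp add: mult_pos_neg)
  moreover have "(l - 1) * (real p - l) \<ge> 0" using l by simp
  ultimately show ?thesis unfolding F using p by simp
qed

lemma F_neg:
  assumes p: "p \<ge> 6" and q: "q \<ge> 3" and l: "l > real p + 2"
  shows "Fq p q l < 0"
proof -
  have l4: "l > 4" using p l by simp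
  define R where "R = cf (q - 1) l"
  have R: "-1 < R" "R < 0" using R_facts[OF q l4] by (auto simp: R_def)
  have F: "Fq p q l = (l - 1) * (- R + real p - l) + (real p - 1)"
    using Fq_cf[OF l4 q, of p] unfolding R_def[symmetric] by (simp add: algebra_simps)
  have "(l - 1) * (- R + real p - l) < (l - 1) * (-1)"
    by (rule mult_strict_left_mono) (use R l l4 in auto)
  then show ?thesis unfolding F using l by simp
qed

lemma F_dec:
  assumes p: "p \<ge> 6" and q: "q \<ge> 3" and l: "real p < l1" "l1 < l2" "l2 \<le> real p + 2"
  shows "Fq p q l2 < Fq p q l1"
proof -
  have l4: "l1 > 4" "l2 > 4" using p l by auto
  define R1 where "R1 = cf (q - 1) l1"
  define R2 where "R2 = cf (q - 1) l2"
  have R1: "-1 < R1" "R1 < 0" using R_facts[OF q l4(1)] by (auto simp: R1_def)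
  have R2: "-1 < R2" "R2 < 0" using R_facts[OF q l4(2)] by (auto simp: R2_def)
  have R12: "R1 \<le> R2" unfolding R1_def R2_def by (rule cf_mono) (use l4 l in auto)
  define T1 where "T1 = (l2 - 1) * (- R2)"
  define T2 where "T2 = (l2 - 1) * (- R1)"
  define T3 where "T3 = (l2 - l1) * (- R1)"
  define T4 where "T4 = (l2 - l1) * (real p + 1 - l1 - l2)"
  have h1: "T1 \<le> T2" unfolding T1_def T2_def by (rule mult_left_mono) (use R12 l4 in auto)
  have h2: "T3 < (l2 - l1)" unfolding T3_def using mult_strict_left_mono[of "- R1" 1 "l2 - l1"] R1 l by simp
  have h3: "T4 \<le> (l2 - l1) * (1 - real p)" unfolding T4_def by (rule mult_left_mono) (use l in auto)
  have h4: "(l2 - l1) * (1 - real p) + (l2 - l1) < 0"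
  proof -
    have "(l2 - l1) * (2 - real p) < 0" using l p by (simp add: mult_pos_neg)
    then show ?thesis by (simp add: algebra_simps)
  qed
  have "Fq p q l2 - Fq p q l1 = (T1 - T2) + T3 + T4"
    using Fq_cf[OF l4(1) q, of p] Fq_cf[OF l4(2) q, of p]
    unfolding R1_def[symmetric] R2_def[symmetric] T1_def T2_def T3_def T4_def
    by (simp add: algebra_simps)
  then show ?thesis using h1 h2 h3 h4 by linarith
qed

lemma F_cont:
  assumes p: "p \<ge> 6" and q: "q \<ge> 3"
  shows "continuous_on {real p .. real p + 2} (Fq p q)"
proof -
  have sc: "continuous_on {real p .. real p + 2} sigma_plus"
    unfolding sigma_plus_def by (intro continuous_intros) auto
  have nz: "\<forall>l\<in>{real p .. real p + 2}. 1 + sigma_plus l ^ (2*q - 1) \<noteq> 0"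
  proof
    fix l assume "l \<in> {real p .. real p + 2}"
    then have l: "l > 4" using p by auto
    show "1 + sigma_plus l ^ (2*q - 1) \<noteq> 0" using gg_pos_factor(2)[OF l, of 0 q] q by simp
  qed
  show ?thesis
    unfolding Fq_def Let_def
    by (intro continuous_intros sc nz)
qed

lemma F_exists:
  assumes p: "p \<ge> 6" and q: "q \<ge> 3"
  shows "\<exists>l. real p < l \<and> l \<le> real p + 2 \<and> Fq p q l = 0"
proof -
  have l4: "real p > 4" "real p + 2 > 4" using p by auto
  have Fa: "Fq p q (real p) > 0" using F_pos[OF p q l4(1)] by simp
  have Fb: "Fq p q (real p + 2) < 0"
  proof -
    define R where "R = cf (q - 1) (real p + 2)"
    have R: "-1 < R" "R < 0" using R_facts[OF q l4(2)] by (auto simp: R_def)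
    have F: "Fq p q (real p + 2) = (real p + 1) * (- R) - 2 * (real p + 1) + (real p - 1)"
      using Fq_cf[OF l4(2) q, of p] unfolding R_def[symmetric] by (simp add: algebra_simps)
    have "(real p + 1) * (- R) < (real p + 1) * 1"
      by (rule mult_strict_left_mono) (use R in auto)
    then show ?thesis unfolding F by simp
  qed
  obtain l where l: "real p \<le> l" "l \<le> real p + 2" "Fq p q l = 0"
    using IVT2'[of "Fq p q" "real p + 2" 0 "real p"] Fa Fb F_cont[OF p q] by auto
  moreover have "l \<noteq> real p" using Fa l by auto
  ultimately show ?thesis by (intro exI[of _ l]) auto
qed

theorem proposition7:
  fixes p q :: nat
  assumes "p \<ge> 6" and "q \<ge> 3"
  shows "(\<forall>lam::real. lam > 4 \<longrightarrow>
            ((\<exists>v \<in> EK_perp p q. v \<noteq> (\<lambda>_. 0) \<and> lap_apply p q v = (\<lambda>i. lam * v i))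
             \<longleftrightarrow> Fq p q lam = 0))
       \<and> (\<exists>!lam::real. real p < lam \<and> lam \<le> real p + 2 \<and> Fq p q lam = 0)
       \<and> (\<forall>lam::real. ((4 < lam \<and> lam \<le> real p) \<or> lam > real p + 2) \<longrightarrow> Fq p q lam \<noteq> 0)"
proof (intro conjI allI impI)
  fix lam :: real assume "lam > 4"
  then show "(\<exists>v \<in> EK_perp p q. v \<noteq> (\<lambda>_. 0) \<and> lap_apply p q v = (\<lambda>i. lam * v i))
             \<longleftrightarrow> Fq p q lam = 0"
    using eigen_part[of p q lam] assms by simp
next
  obtain l where l: "real p < l" "l \<le> real p + 2" "Fq p q l = 0" using F_exists[OF assms] by blast
  show "\<exists>!lam::real. real p < lam \<and> lam \<le> real p + 2 \<and> Fq p q lam = 0"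
  proof (rule ex1I[of _ l])
    show "real p < l \<and> l \<le> real p + 2 \<and> Fq p q l = 0" using l by simp
    fix m assume m: "real p < m \<and> m \<le> real p + 2 \<and> Fq p q m = 0"
    show "m = l"
    proof (rule ccontr)
      assume "m \<noteq> l"
      then consider "m < l" | "l < m" by linarith
      then show False
      proof cases
        case 1 then show False using F_dec[OF assms, of m l] l m by simp
      next
        case 2 then show False using F_dec[OF assms, of l m] l m by simp
      qed
    qed
  qed
next
  fix lam :: real assume "(4 < lam \<and> lam \<le> real p) \<or> lam > real p + 2"
  then show "Fq p q lam \<noteq> 0" using F_pos[OF assms, of lam] F_neg[OF assms, of lam] by auto
qed

end
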